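(* Consider the linear probing filter (defined in the context) with table size $t$ a power of two, built by inserting the keys of a set $S\subseteq[u]$ with $|S|=n\le\frac23 t$ in some order. Assume that $h$ and $s$ are independent, that $h:[u]\to[t]$ is 5-independent, and that $s:[u]\to[2^b]$ is universal. Then for any given key $q\in[u]\setminus S$, the probability that the filter answers ``yes'' on $q$ (a false positive) is at most $C/2^b$ for an absolute constant $C$.
   Context: Let $[s]=\{0,\dots,s-1\}$. A random hash function $h:[u]\to[t]$ is 5-independent if for any distinct $x_0,\dots,x_4\in[u]$ and any $y_0,\dots,y_4\in[t]$, $\Pr[h(x_i)=y_i\ \forall i]=1/t^5$. A random function $s:[u]\to[2^b]$ is universal if $\Pr[s(x)=s(y)]\le 1/2^b$ for all distinct $x,y\in[u]$; $s(x)$ is called the signature of $x$. Linear probing filter: an array $T$ of positions (indexed by nonnegative integers, wrap-around ignored), each either empty or holding a signature. To query $q$: scan positions $h(q),h(q)+1,\dots$ until the first empty position; answer ``yes'' if $s(q)$ is found among the scanned signatures, else ``no''. To insert $q$: if a query for $q$ answers ``yes'', do nothing; otherwise place $s(q)$ in the first empty position at or after $h(q)$. The filter starts empty and the keys of $S$ are inserted one by one. *)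

theory Defs
  imports "HOL-Probability.Probability"
begin

text \<open>Linear probing filter. The table maps positions (naturals, no wrap-around)
  to an optional signature. Keys and signatures are naturals.\<close>

type_synonym lp_table = "nat \<Rightarrow> nat option"

definition first_empty :: "lp_table \<Rightarrow> nat \<Rightarrow> nat" where
  "first_empty T p = (LEAST j. p \<le> j \<and> T j = None)"

definition lp_query :: "(nat \<Rightarrow> nat) \<Rightarrow> (nat \<Rightarrow> nat) \<Rightarrow> lp_table \<Rightarrow> nat \<Rightarrow> bool" where
  "lp_query h s T q = (\<exists>j. h q \<le> j \<and> j < first_empty T (h q) \<and> T j = Some (s q))"

definition lp_insert :: "(nat \<Rightarrow> nat) \<Rightarrow> (nat \<Rightarrow> nat) \<Rightarrow> lp_table \<Rightarrow> nat \<Rightarrow> lp_table" where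
  "lp_insert h s T q =
     (if lp_query h s T q then T else T(first_empty T (h q) := Some (s q)))"

definition lp_build :: "(nat \<Rightarrow> nat) \<Rightarrow> (nat \<Rightarrow> nat) \<Rightarrow> nat list \<Rightarrow> lp_table" where
  "lp_build h s xs = foldl (lp_insert h s) (\<lambda>_. None) xs"

definition five_independent :: "(nat \<Rightarrow> nat) pmf \<Rightarrow> nat \<Rightarrow> nat \<Rightarrow> bool" where
  "five_independent H u t =
     ((\<forall>h\<in>set_pmf H. \<forall>x<u. h x < t) \<and>
      (\<forall>xs ys. length xs = 5 \<and> length ys = 5 \<and> distinct xs \<and> set xs \<subseteq> {..<u}
          \<and> set ys \<subseteq> {..<t} \<longrightarrow>
          measure_pmf.prob H {h. \<forall>i<5. h (xs ! i) = ys ! i} = 1 / real t ^ 5))"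

definition universal_sig :: "(nat \<Rightarrow> nat) pmf \<Rightarrow> nat \<Rightarrow> nat \<Rightarrow> bool" where
  "universal_sig \<Sigma> u b =
     ((\<forall>s\<in>set_pmf \<Sigma>. \<forall>x<u. s x < 2 ^ b) \<and>
      (\<forall>x y. x < u \<and> y < u \<and> x \<noteq> y \<longrightarrow>
          measure_pmf.prob \<Sigma> {s. s x = s y} \<le> 1 / 2 ^ b))"

end

theory Submission
  imports Defs
begin


definition keys :: "(nat \<Rightarrow> nat) \<Rightarrow> nat set \<Rightarrow> nat \<Rightarrow> nat \<Rightarrow> nat set" where
  "keys h S a b = {y\<in>S. a \<le> h y \<and> h y \<le> b}"

definition full :: "(nat \<Rightarrow> nat) \<Rightarrow> nat set \<Rightarrow> nat \<Rightarrow> nat \<Rightarrow> bool" where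
  "full h S a b = (a \<le> b \<and> b + 1 - a \<le> card (keys h S a b))"

definition Ev :: "(nat \<Rightarrow> nat) \<Rightarrow> nat set \<Rightarrow> nat \<Rightarrow> nat \<Rightarrow> bool" where
  "Ev h S q x = (\<exists>a b. a \<le> h x \<and> h x \<le> b \<and> a \<le> h q \<and> h q \<le> b \<and> full h S a b)"

lemma fe_props:
  assumes "finite {j. T j \<noteq> None}"
  shows "p \<le> first_empty T p \<and> T (first_empty T p) = None \<and>
         (\<forall>i. p \<le> i \<and> i < first_empty T p \<longrightarrow> T i \<noteq> None)"
proof -
  have "\<exists>j. p \<le> j \<and> T j = None"
  proof (rule ccontr)
    assume "\<not> ?thesis"
    then have "{p..} \<subseteq> {j. T j \<noteq> None}" by auto
    with assms have "finite {p..}" by (rule finite_subset[rotated])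
    then show False by (metis infinite_Ici)
  qed
  then obtain j where j: "p \<le> j \<and> T j = None" by blast
  show ?thesis unfolding first_empty_def
    using LeastI[of "\<lambda>j. p \<le> j \<and> T j = None", OF j] not_less_Least[of _ "\<lambda>j. p \<le> j \<and> T j = None"]
    by auto
qed

definition kstep :: "(nat \<Rightarrow> nat) \<Rightarrow> (nat \<Rightarrow> nat) \<Rightarrow> lp_table \<times> lp_table \<Rightarrow> nat \<Rightarrow> lp_table \<times> lp_table" where
  "kstep h s TK x = (let T = fst TK; K = snd TK in
     if lp_query h s T x then (T, K)
     else (T(first_empty T (h x) := Some (s x)), K(first_empty T (h x) := Some x)))"

definition kbuild where "kbuild h s xs = foldl (kstep h s) (\<lambda>_. None, \<lambda>_. None) xs"

lemma kbuild_fst: "fst (kbuild h s xs) = lp_build h s xs"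
  by (induction xs rule: rev_induct)
     (auto simp: kbuild_def lp_build_def kstep_def lp_insert_def Let_def)

definition lp_inv :: "(nat \<Rightarrow> nat) \<Rightarrow> (nat \<Rightarrow> nat) \<Rightarrow> nat set \<Rightarrow> lp_table \<times> lp_table \<Rightarrow> bool" where
  "lp_inv h s D TK = ((\<forall>j. fst TK j = map_option s (snd TK j)) \<and>
     (\<forall>j x. snd TK j = Some x \<longrightarrow> x \<in> D \<and> h x \<le> j \<and> (\<forall>i. h x \<le> i \<and> i \<le> j \<longrightarrow> fst TK i \<noteq> None)) \<and>
     (\<forall>i j x. snd TK i = Some x \<and> snd TK j = Some x \<longrightarrow> i = j) \<and>
     finite {j. fst TK j \<noteq> None})"

lemma lp_inv_step:
  assumes "lp_inv h s D (T, K)" "x \<notin> D"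
  shows "lp_inv h s (insert x D) (kstep h s (T, K) x)"
proof (cases "lp_query h s T x")
  case True
  then have "kstep h s (T, K) x = (T, K)" by (simp add: kstep_def)
  moreover have "lp_inv h s (insert x D) (T, K)" using assms(1) unfolding lp_inv_def fst_conv snd_conv by (intro conjI; elim conjE; blast)
  ultimately show ?thesis by simp
next
  case False
  define f where "f = first_empty T (h x)"
  have fin: "finite {j. T j \<noteq> None}" using assms(1) unfolding lp_inv_def fst_conv by (elim conjE) assumption
  note fe = fe_props[OF fin, of "h x", folded f_def]
  have ks: "kstep h s (T, K) x = (T(f := Some (s x)), K(f := Some x))"
    using False by (simp add: kstep_def f_def)
  have fin2: "finite {j. (T(f := Some (s x))) j \<noteq> None}"
    by (rule finite_subset[of _ "insert f {j. T j \<noteq> None}"]) (use fin in auto)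
  have A: "\<forall>j. (T(f := Some (s x))) j = map_option s ((K(f := Some x)) j)"
    using assms(1) by (auto simp: lp_inv_def)
  have B: "\<forall>j y. (K(f := Some x)) j = Some y \<longrightarrow> y \<in> insert x D \<and> h y \<le> j \<and>
       (\<forall>i. h y \<le> i \<and> i \<le> j \<longrightarrow> (T(f := Some (s x))) i \<noteq> None)"
  proof (intro allI impI)
    fix j y assume jy: "(K(f := Some x)) j = Some y"
    show "y \<in> insert x D \<and> h y \<le> j \<and> (\<forall>i. h y \<le> i \<and> i \<le> j \<longrightarrow> (T(f := Some (s x))) i \<noteq> None)"
    proof (cases "j = f")
      case True
      then have "y = x" using jy by simp
      then show ?thesis using fe True by (auto simp: le_less)
    next
      case False
      then have "K j = Some y" using jy by simp
      then show ?thesis using assms(1) unfolding lp_inv_def by auto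
    qed
  qed
  have C: "\<forall>i j y. (K(f := Some x)) i = Some y \<and> (K(f := Some x)) j = Some y \<longrightarrow> i = j"
  proof (intro allI impI)
    fix i j y assume h: "(K(f := Some x)) i = Some y \<and> (K(f := Some x)) j = Some y"
    have notx: "\<And>k. K k \<noteq> Some x" using assms unfolding lp_inv_def by auto
    show "i = j"
    proof (cases "i = f"; cases "j = f")
      assume "i = f" "j \<noteq> f" then show ?thesis using h notx by auto
    next
      assume "i \<noteq> f" "j = f" then show ?thesis using h notx by auto
    next
      assume "i \<noteq> f" "j \<noteq> f" then show ?thesis using h assms(1) unfolding lp_inv_def by auto
    qed auto
  qed
  show ?thesis unfolding ks lp_inv_def prod.sel using A B C fin2 by blast
qed

lemma lp_inv_kbuild:
  "distinct xs \<Longrightarrow> lp_inv h s (set xs) (kbuild h s xs)"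
proof (induction xs rule: rev_induct)
  case Nil
  then show ?case by (simp add: kbuild_def lp_inv_def)
next
  case (snoc x xs)
  then have "lp_inv h s (set xs) (kbuild h s xs)" "x \<notin> set xs" by auto
  then have "lp_inv h s (insert x (set xs)) (kstep h s (kbuild h s xs) x)"
    using lp_inv_step[of h s "set xs" "fst (kbuild h s xs)" "snd (kbuild h s xs)" x] by simp
  then show ?case by (simp add: kbuild_def)
qed

lemma query_yes_Ev:
  assumes "lp_inv h s D (T, K)" "finite D" "lp_query h s T q"
  shows "\<exists>x\<in>D. s x = s q \<and> Ev h D q x"
proof -
  have fin: "finite {j. T j \<noteq> None}" using assms(1) unfolding lp_inv_def fst_conv by (elim conjE) assumption
  note fe = fe_props[OF fin, of "h q"]
  have I1: "\<And>j. T j = map_option s (K j)" using assms(1) unfolding lp_inv_def prod.sel by blast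
  have I2: "\<And>j x. K j = Some x \<Longrightarrow> x \<in> D \<and> h x \<le> j \<and> (\<forall>i. h x \<le> i \<and> i \<le> j \<longrightarrow> T i \<noteq> None)"
    using assms(1) unfolding lp_inv_def prod.sel by blast
  have I3: "\<And>i j x. K i = Some x \<Longrightarrow> K j = Some x \<Longrightarrow> i = j"
    using assms(1) unfolding lp_inv_def prod.sel by blast
  have I4: "\<And>i. T i \<noteq> None \<Longrightarrow> K i = Some (the (K i))"
    using I1 by (metis option.collapse option.map_disc_iff)
  obtain j where j: "h q \<le> j" "j < first_empty T (h q)" "T j = Some (s q)"
    using assms(3) unfolding lp_query_def by blast
  have TK: "T j = map_option s (K j)" by (rule I1)
  then obtain x where x: "K j = Some x" "s x = s q" using j(3)
    by (cases "K j") auto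
  have xp: "x \<in> D" "h x \<le> j" "\<forall>i. h x \<le> i \<and> i \<le> j \<longrightarrow> T i \<noteq> None"
    using I2[OF x(1)] by auto
  have qocc: "\<forall>i. h q \<le> i \<and> i \<le> j \<longrightarrow> T i \<noteq> None" using fe j by auto
  define P where "P = (\<lambda>a. \<forall>i. a \<le> i \<and> i \<le> j \<longrightarrow> T i \<noteq> None)"
  define a where "a = (LEAST a. P a)"
  have Pa: "P a" unfolding a_def by (rule LeastI[of P "h x"]) (use xp P_def in auto)
  have ax: "a \<le> h x" unfolding a_def by (rule Least_le) (use xp P_def in auto)
  have aq: "a \<le> h q" unfolding a_def by (rule Least_le) (use qocc P_def in auto)
  have aj: "a \<le> j" using ax xp by simp
  have prev: "a > 0 \<Longrightarrow> T (a - 1) = None"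
  proof (rule ccontr)
    assume "a > 0" "T (a - 1) \<noteq> None"
    then have "P (a - 1)" using Pa unfolding P_def by (metis Suc_pred' not_less_eq_eq le_antisym)
    then have "a \<le> a - 1" unfolding a_def by (rule Least_le)
    with \<open>a > 0\<close> show False by simp
  qed
  define g where "g = (\<lambda>i. the (K i))"
  have gmap: "g ` {a..j} \<subseteq> keys h D a j"
  proof
    fix y assume "y \<in> g ` {a..j}"
    then obtain i where i: "a \<le> i" "i \<le> j" "y = g i" by auto
    then have "T i \<noteq> None" using Pa P_def by auto
    then have Ki: "K i = Some y" using I4 i(3) unfolding g_def by blast
    then have yp: "y \<in> D" "h y \<le> i" "\<forall>k. h y \<le> k \<and> k \<le> i \<longrightarrow> T k \<noteq> None"
      using I2[OF Ki] by auto
    have "a \<le> h y"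
    proof (rule ccontr)
      assume "\<not> a \<le> h y"
      then have "a > 0" "h y \<le> a - 1" "a - 1 \<le> i" using i by auto
      then show False using yp(3) prev by auto
    qed
    then show "y \<in> keys h D a j" using yp i unfolding keys_def by auto
  qed
  have ginj: "inj_on g {a..j}"
  proof (rule inj_onI)
    fix i k assume ik: "i \<in> {a..j}" "k \<in> {a..j}" "g i = g k"
    have "T i \<noteq> None" "T k \<noteq> None" using ik Pa P_def by auto
    then have "K i = Some (g i)" "K k = Some (g k)" using I4 unfolding g_def by blast+
    then show "i = k" using ik(3) I3 by metis
  qed
  have "card {a..j} \<le> card (keys h D a j)"
    by (rule card_inj_on_le[OF ginj gmap]) (use assms(2) in \<open>simp add: keys_def\<close>)
  then have "full h D a j" unfolding full_def using aj by simp
  then have "Ev h D q x" unfolding Ev_def using ax aq xp j by blast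
  then show ?thesis using xp x by blast
qed

lemma yes_imp:
  assumes "distinct xs" "lp_query h s (lp_build h s xs) q"
  shows "\<exists>x\<in>set xs. s x = s q \<and> Ev h (set xs) q x"
proof -
  have "lp_inv h s (set xs) (fst (kbuild h s xs), snd (kbuild h s xs))"
    using lp_inv_kbuild[OF assms(1)] by simp
  then show ?thesis using query_yes_Ev assms(2) kbuild_fst by (metis finite_set)
qed




lemma integrable_bnd:
  fixes f :: "'a \<Rightarrow> real"
  assumes "\<And>h. \<bar>f h\<bar> \<le> B"
  shows "integrable (measure_pmf H) f"
  by (rule measure_pmf.integrable_const_bound[where B=B]) (use assms in auto)

lemma prod_prob:
  "measure_pmf.prob (pair_pmf M N) (A \<times> B) = measure_pmf.prob M A * measure_pmf.prob N B"
proof -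
  have "(A \<times> B) \<inter> set_pmf (pair_pmf M N) = (A \<inter> set_pmf M) \<times> (B \<inter> set_pmf N)" by auto
  then have "measure_pmf.prob (pair_pmf M N) (A \<times> B) =
     measure_pmf.prob (pair_pmf M N) ((A \<inter> set_pmf M) \<times> (B \<inter> set_pmf N))"
    by (metis measure_Int_set_pmf)
  also have "\<dots> = measure_pmf.prob M (A \<inter> set_pmf M) * measure_pmf.prob N (B \<inter> set_pmf N)"
    by (rule measure_pmf_prob_product) (auto intro: countable_subset)
  also have "\<dots> = measure_pmf.prob M A * measure_pmf.prob N B" by (simp add: measure_Int_set_pmf)
  finally show ?thesis .
qed

lemma prob_map_finite:
  assumes "finite Ls"
  shows "measure_pmf.prob H {h. f h \<in> Ls} = (\<Sum>w\<in>Ls. measure_pmf.prob H {h. f h = w})"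
proof -
  have "measure_pmf.prob H {h. f h \<in> Ls} = measure_pmf.prob (map_pmf f H) Ls"
    by (simp add: vimage_def)
  also have "\<dots> = (\<Sum>w\<in>Ls. pmf (map_pmf f H) w)" by (rule measure_measure_pmf_finite[OF assms])
  also have "\<dots> = (\<Sum>w\<in>Ls. measure_pmf.prob H {h. f h = w})"
    by (simp add: pmf_map vimage_def)
  finally show ?thesis .
qed

lemma prob_supp_cong:
  assumes "\<And>h. h \<in> set_pmf H \<Longrightarrow> (h \<in> A) = (h \<in> B)"
  shows "measure_pmf.prob H A = measure_pmf.prob H B"
proof -
  have "A \<inter> set_pmf H = B \<inter> set_pmf H" using assms by auto
  then show ?thesis by (metis measure_Int_set_pmf)
qed

lemma PP:
  assumes fi: "five_independent H u t" and u5: "5 \<le> u" and tpos: "0 < t"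
  shows "distinct ks \<Longrightarrow> length ks \<le> 5 \<Longrightarrow> set ks \<subseteq> {..<u} \<Longrightarrow> length ys = length ks
     \<Longrightarrow> set ys \<subseteq> {..<t} \<Longrightarrow> measure_pmf.prob H {h. map h ks = ys} = 1 / real t ^ length ks"
proof (induction "5 - length ks" arbitrary: ks ys)
  case 0
  then have l5: "length ks = 5" by simp
  have "{h. map h ks = ys} = {h. \<forall>i<5. h (ks ! i) = ys ! i}"
    using l5 0 by (auto simp: list_eq_iff_nth_eq)
  then show ?case using fi 0 l5 unfolding five_independent_def by simp
next
  case (Suc d)
  have "card (set ks) < card {..<u}" using Suc u5 distinct_card[of ks] by simp
  then have "\<not> {..<u} \<subseteq> set ks" by (meson card_mono List.finite_set not_le)
  then obtain z where z: "z < u" "z \<notin> set ks" by auto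
  define Ys where "Ys = (\<lambda>y. ys @ [y]) ` {..<t}"
  have sup: "\<And>h. h \<in> set_pmf H \<Longrightarrow> \<forall>x<u. h x < t" using fi unfolding five_independent_def by blast
  have "measure_pmf.prob H {h. map h ks = ys} = measure_pmf.prob H {h. map h (ks @ [z]) \<in> Ys}"
    by (rule prob_supp_cong) (use sup z in \<open>auto simp: Ys_def\<close>)
  also have "\<dots> = (\<Sum>w\<in>Ys. measure_pmf.prob H {h. map h (ks @ [z]) = w})"
    by (rule prob_map_finite) (simp add: Ys_def)
  also have "\<dots> = (\<Sum>y<t. measure_pmf.prob H {h. map h (ks @ [z]) = ys @ [y]})"
    unfolding Ys_def by (subst sum.reindex) (auto simp: inj_on_def)
  also have "\<dots> = (\<Sum>y<t. 1 / real t ^ length (ks @ [z]))"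
  proof (rule sum.cong[OF refl])
    fix y assume "y \<in> {..<t}"
    then show "measure_pmf.prob H {h. map h (ks @ [z]) = ys @ [y]} = 1 / real t ^ length (ks @ [z])"
      using Suc.hyps(1)[of "ks @ [z]" "ys @ [y]"] Suc.hyps(2) Suc.prems z by auto
  qed
  also have "\<dots> = 1 / real t ^ length ks" using tpos by simp
  finally show ?case .
qed

lemma EV:
  assumes fi: "five_independent H u t" and u5: "5 \<le> u" and tpos: "0 < t"
    and "q < u" "distinct xs" "q \<notin> set xs" "set xs \<subseteq> {..<u}" "length xs \<le> 4" "p < t"
  shows "measure_pmf.prob H {h. h q = p \<and> (\<forall>x\<in>set xs. h x \<in> B)}
     = real (card (B \<inter> {..<t})) ^ length xs / real t ^ Suc (length xs)"
proof -
  define B' where "B' = B \<inter> {..<t}"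
  define Ls where "Ls = (\<lambda>zs. p # zs) ` {zs. set zs \<subseteq> B' \<and> length zs = length xs}"
  have finB: "finite B'" by (simp add: B'_def)
  have sup: "\<And>h. h \<in> set_pmf H \<Longrightarrow> \<forall>x<u. h x < t" using fi unfolding five_independent_def by blast
  have "measure_pmf.prob H {h. h q = p \<and> (\<forall>x\<in>set xs. h x \<in> B)} =
        measure_pmf.prob H {h. map h (q # xs) \<in> Ls}"
  proof (rule prob_supp_cong)
    fix h assume "h \<in> set_pmf H"
    then have "\<forall>x\<in>set xs. h x < t" using sup assms(7) by auto
    then show "(h \<in> {h. h q = p \<and> (\<forall>x\<in>set xs. h x \<in> B)}) = (h \<in> {h. map h (q # xs) \<in> Ls})"
      by (auto simp: Ls_def B'_def intro!: image_eqI[where x="map h xs"])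
  qed
  also have "\<dots> = (\<Sum>w\<in>Ls. measure_pmf.prob H {h. map h (q # xs) = w})"
    by (rule prob_map_finite) (simp add: Ls_def finite_lists_length_eq finB)
  also have "\<dots> = (\<Sum>w\<in>Ls. 1 / real t ^ Suc (length xs))"
  proof (rule sum.cong[OF refl])
    fix w assume "w \<in> Ls"
    then have "length w = length (q # xs)" "set w \<subseteq> {..<t}"
      using assms(9) by (auto simp: Ls_def B'_def)
    then show "measure_pmf.prob H {h. map h (q # xs) = w} = 1 / real t ^ Suc (length xs)"
      using PP[OF fi u5 tpos, of "q # xs" w] assms by auto
  qed
  also have "\<dots> = real (card Ls) / real t ^ Suc (length xs)" by simp
  also have "card Ls = card B' ^ length xs"
    unfolding Ls_def by (subst card_image) (auto simp: card_lists_length_eq[OF finB])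
  finally show ?thesis by (simp add: B'_def)
qed




definition DL :: "nat set \<Rightarrow> nat \<Rightarrow> nat list set" where
  "DL A k = {xs. length xs = k \<and> distinct xs \<and> set xs \<subseteq> A}"

fun ff :: "real \<Rightarrow> nat \<Rightarrow> real" where
  "ff x 0 = 1" | "ff x (Suc k) = ff x k * (x - real k)"

lemma ff_zero: "n < k \<Longrightarrow> ff (real n) k = 0"
proof (induction k)
  case 0 then show ?case by simp
next
  case (Suc k)
  then show ?case by (cases "n = k") auto
qed

lemma prod_ff: "k \<le> n \<Longrightarrow> real (\<Prod>{n - k + 1..n}) = ff (real n) k"
proof (induction k)
  case 0 then show ?case by simp
next
  case (Suc k)
  have "{n - Suc k + 1..n} = insert (n - k) {n - k + 1..n}" using Suc.prems by auto
  then have "\<Prod>{n - Suc k + 1..n} = (n - k) * \<Prod>{n - k + 1..n}" by simp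
  then show ?case using Suc by (simp add: of_nat_diff)
qed

lemma card_DL: "finite A \<Longrightarrow> real (card (DL A k)) = ff (real (card A)) k"
proof (cases "k \<le> card A")
  case True
  assume "finite A"
  then show ?thesis unfolding DL_def using card_lists_distinct_length_eq[OF _ True] prod_ff[OF True] by simp
next
  case False
  assume fin: "finite A"
  have "DL A k = {}"
  proof (rule ccontr)
    assume "DL A k \<noteq> {}"
    then obtain xs where "length xs = k" "distinct xs" "set xs \<subseteq> A" unfolding DL_def by auto
    then have "k \<le> card A" using card_mono[OF fin] distinct_card by metis
    then show False using False by simp
  qed
  then show ?thesis using ff_zero False by simp
qed

lemma finite_DL: "finite A \<Longrightarrow> finite (DL A k)"
  unfolding DL_def by (rule finite_subset[OF _ finite_lists_length_eq[of A k]]) auto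

locale setting =
  fixes H :: "(nat \<Rightarrow> nat) pmf" and u t :: nat and S :: "nat set" and q :: nat
  assumes fi: "five_independent H u t" and u5: "5 \<le> u" and tpos: "0 < t"
    and Su: "S \<subseteq> {..<u}" and qu: "q < u" and qS: "q \<notin> S"
begin

lemma finS: "finite S" using Su finite_subset by blast

lemma FM:
  assumes "k \<le> 4" "p < t"
  shows "measure_pmf.expectation H (\<lambda>h. indicator {h. h q = p} h * real (card (DL {y\<in>S. h y \<in> B} k)))
     = real (card (DL S k)) * real (card (B \<inter> {..<t})) ^ k / real t ^ Suc k"
proof -
  have eq: "\<And>h. indicator {h. h q = p} h * real (card (DL {y\<in>S. h y \<in> B} k)) =
     (\<Sum>xs\<in>DL S k. indicator {h. h q = p \<and> (\<forall>x\<in>set xs. h x \<in> B)} h)"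
  proof -
    fix h
    have "DL {y\<in>S. h y \<in> B} k = {xs\<in>DL S k. \<forall>x\<in>set xs. h x \<in> B}" unfolding DL_def by auto
    then have "real (card (DL {y\<in>S. h y \<in> B} k)) = (\<Sum>xs\<in>DL S k. if \<forall>x\<in>set xs. h x \<in> B then 1 else 0)"
      using sum.inter_filter[OF finite_DL[OF finS, of k], of "\<lambda>_. 1::real" "\<lambda>xs. \<forall>x\<in>set xs. h x \<in> B", symmetric]
      by simp
    then show "indicator {h. h q = p} h * real (card (DL {y\<in>S. h y \<in> B} k)) =
     (\<Sum>xs\<in>DL S k. indicator {h. h q = p \<and> (\<forall>x\<in>set xs. h x \<in> B)} h)"
      by (cases "h q = p") (simp_all add: indicator_def of_bool_def)
  qed
  have "measure_pmf.expectation H (\<lambda>h. indicator {h. h q = p} h * real (card (DL {y\<in>S. h y \<in> B} k)))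
     = (\<Sum>xs\<in>DL S k. measure_pmf.expectation H (indicator {h. h q = p \<and> (\<forall>x\<in>set xs. h x \<in> B)}))"
    unfolding eq by (rule Bochner_Integration.integral_sum, rule integrable_bnd[where B=1], simp add: indicator_def)
  also have "\<dots> = (\<Sum>xs\<in>DL S k. real (card (B \<inter> {..<t})) ^ k / real t ^ Suc k)"
  proof (rule sum.cong[OF refl])
    fix xs assume "xs \<in> DL S k"
    then have "length xs = k" "distinct xs" "set xs \<subseteq> S" by (auto simp: DL_def)
    then show "measure_pmf.expectation H (indicator {h. h q = p \<and> (\<forall>x\<in>set xs. h x \<in> B)}) =
        real (card (B \<inter> {..<t})) ^ k / real t ^ Suc k"
    proof -
      have "q \<notin> set xs" "set xs \<subseteq> {..<u}" using \<open>set xs \<subseteq> S\<close> qS Su by auto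
      then have "measure_pmf.prob H {h. h q = p \<and> (\<forall>x\<in>set xs. h x \<in> B)} =
         real (card (B \<inter> {..<t})) ^ length xs / real t ^ Suc (length xs)"
        using EV[OF fi u5 tpos qu \<open>distinct xs\<close> _ _ _ \<open>p < t\<close>, of B] \<open>length xs = k\<close> \<open>k \<le> 4\<close>
        by blast
      then show ?thesis using \<open>length xs = k\<close> by simp
    qed
  qed
  finally show ?thesis by simp
qed

end



lemma ff1: "ff x 1 = x" by simp
lemma ff2: "ff x 2 = x * (x - 1)" by (simp add: numeral_eq_Suc)
lemma ff3: "ff x 3 = x * (x - 1) * (x - 2)" by (simp add: numeral_eq_Suc)
lemma ff4: "ff x 4 = x * (x - 1) * (x - 2) * (x - 3)" by (simp add: numeral_eq_Suc)

lemma poly_id: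
  fixes X \<mu> :: real
  shows "(X - \<mu>) ^ 4 = ff X 4 + (6 - 4*\<mu>) * ff X 3 + (7 - 12*\<mu> + 6*\<mu>^2) * ff X 2
     + (1 - 4*\<mu> + 6*\<mu>^2 - 4*\<mu>^3) * ff X 1 + \<mu>^4 * ff X 0"
  unfolding ff1 ff2 ff3 ff4 by (simp add: algebra_simps power2_eq_square power3_eq_cube power4_eq_xxxx)

lemma poly_bound:
  fixes n \<pi> :: real
  assumes "0 \<le> \<pi>" "\<pi> \<le> 1" "n \<in> \<nat>"
  shows "ff n 4 * \<pi>^4 + (6 - 4*(n*\<pi>)) * (ff n 3 * \<pi>^3) + (7 - 12*(n*\<pi>) + 6*(n*\<pi>)^2) * (ff n 2 * \<pi>^2)
     + (1 - 4*(n*\<pi>) + 6*(n*\<pi>)^2 - 4*(n*\<pi>)^3) * (ff n 1 * \<pi>^1) + (n*\<pi>)^4 * (ff n 0 * \<pi>^0)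
     \<le> n*\<pi> + 3 * (n*\<pi>)^2"
proof -
  define a where "a = \<pi> * (1 - \<pi>)"
  have eq: "ff n 4 * \<pi>^4 + (6 - 4*(n*\<pi>)) * (ff n 3 * \<pi>^3) + (7 - 12*(n*\<pi>) + 6*(n*\<pi>)^2) * (ff n 2 * \<pi>^2)
     + (1 - 4*(n*\<pi>) + 6*(n*\<pi>)^2 - 4*(n*\<pi>)^3) * (ff n 1 * \<pi>^1) + (n*\<pi>)^4 * (ff n 0 * \<pi>^0)
     = n * a + 3 * (n * (n - 2)) * a^2"
    unfolding ff1 ff2 ff3 ff4 a_def by (simp add: algebra_simps power2_eq_square power3_eq_cube power4_eq_xxxx)
  have a0: "0 \<le> a" "a \<le> \<pi>" using assms unfolding a_def by (auto simp: mult_left_le mult_nonneg_nonneg)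
  have n0: "0 \<le> n" using assms(3) by (auto elim: Nats_cases)
  have "n * a \<le> n * \<pi>" using a0 n0 by (simp add: mult_left_mono)
  moreover have "3 * (n * (n - 2)) * a^2 \<le> 3 * (n*\<pi>)^2"
  proof (cases "n \<ge> 2")
    case True
    have "a^2 \<le> \<pi>^2" using a0 by (simp add: power_mono)
    moreover have "n * (n - 2) \<le> n^2" using n0 by (simp add: power2_eq_square algebra_simps)
    moreover have "0 \<le> n * (n - 2)" using True n0 by simp
    ultimately have "(n * (n - 2)) * a^2 \<le> n^2 * \<pi>^2"
      by (meson mult_mono zero_le_power2 order_trans power2_eq_square mult_nonneg_nonneg)
    then show ?thesis by (simp add: power_mult_distrib)
  next
    case False
    then have "n * (n - 2) \<le> 0" using n0 by (simp add: mult_nonneg_nonpos)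
    then have le0: "(n * (n - 2)) * a^2 \<le> 0" by (simp add: mult_nonpos_nonneg)
    have "3 * (n * (n - 2)) * a^2 = 3 * ((n * (n - 2)) * a^2)" by simp
    then show ?thesis using le0 zero_le_power2[of "n*\<pi>"] by linarith
  qed
  ultimately show ?thesis unfolding eq by linarith
qed

context setting begin

lemma M4:
  fixes B :: "nat set"
  assumes "p < t"
  defines "\<pi> \<equiv> real (card (B \<inter> {..<t})) / real t"
  defines "\<mu> \<equiv> real (card S) * \<pi>"
  shows "measure_pmf.expectation H (\<lambda>h. indicator {h. h q = p} h * (real (card {y\<in>S. h y \<in> B}) - \<mu>) ^ 4)
     \<le> (\<mu> + 3 * \<mu>^2) / real t"
proof -
  define X where "X = (\<lambda>h. real (card {y\<in>S. h y \<in> B}))"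
  define I where "I = (\<lambda>h. indicator {h. h q = p} h :: real)"
  define E where "E = (\<lambda>k. measure_pmf.expectation H (\<lambda>h. I h * ff (X h) k))"
  have Ek: "E k = ff (real (card S)) k * \<pi>^k / real t" if "k \<le> 4" for k
  proof -
    have "ff (X h) k = real (card (DL {y\<in>S. h y \<in> B} k))" for h
      unfolding X_def using card_DL[of "{y\<in>S. h y \<in> B}" k] finS by simp
    then have "E k = real (card (DL S k)) * real (card (B \<inter> {..<t})) ^ k / real t ^ Suc k"
      unfolding E_def I_def using FM[OF that assms(1), of B] by simp
    then show ?thesis unfolding \<pi>_def using card_DL[OF finS, of k] tpos
      by (simp add: power_divide)
  qed
  have bndX: "\<And>h. \<bar>X h\<bar> \<le> real (card S)"
    unfolding X_def using finS by (simp add: card_mono)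
  have intk: "integrable (measure_pmf H) (\<lambda>h. I h * ff (X h) k)" if "k \<le> 4" for k
  proof -
    have "\<And>x. \<bar>x\<bar> \<le> real (card S) \<Longrightarrow> \<bar>ff x k\<bar> \<le> (2 * real (card S) + 4) ^ k" 
    proof -
      fix x :: real assume hx: "\<bar>x\<bar> \<le> real (card S)"
      show "\<bar>ff x k\<bar> \<le> (2 * real (card S) + 4) ^ k" using that
      proof (induction k)
        case 0 then show ?case by simp
      next
        case (Suc k)
        then have ih: "\<bar>ff x k\<bar> \<le> (2 * real (card S) + 4) ^ k" by simp
        have "\<bar>x - real k\<bar> \<le> 2 * real (card S) + 4" using hx Suc.prems by linarith
        then have "\<bar>ff x k\<bar> * \<bar>x - real k\<bar> \<le> (2 * real (card S) + 4) ^ k * (2 * real (card S) + 4)"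
          using ih by (intro mult_mono) auto
        then show ?case by (simp add: abs_mult mult.commute)
      qed
    qed
    then have "\<And>h. \<bar>I h * ff (X h) k\<bar> \<le> (2 * real (card S) + 4) ^ k"
      using bndX unfolding I_def
      by (auto simp: indicator_def abs_mult)
    then show ?thesis by (rule integrable_bnd)
  qed
  have pt: "\<And>h. I h * (X h - \<mu>) ^ 4 = I h * ff (X h) 4 + (6 - 4*\<mu>) * (I h * ff (X h) 3)
     + (7 - 12*\<mu> + 6*\<mu>^2) * (I h * ff (X h) 2) + (1 - 4*\<mu> + 6*\<mu>^2 - 4*\<mu>^3) * (I h * ff (X h) 1)
     + \<mu>^4 * (I h * ff (X h) 0)"
    unfolding poly_id by (simp add: algebra_simps)
  have "measure_pmf.expectation H (\<lambda>h. I h * (X h - \<mu>) ^ 4) =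
     E 4 + (6 - 4*\<mu>) * E 3 + (7 - 12*\<mu> + 6*\<mu>^2) * E 2 + (1 - 4*\<mu> + 6*\<mu>^2 - 4*\<mu>^3) * E 1 + \<mu>^4 * E 0"
    unfolding pt E_def
    using intk[of 4] intk[of 3] intk[of 2] intk[of 1, simplified] intk[of 0, simplified]
    by (simp add: Bochner_Integration.integral_add integrable_mult_right Bochner_Integration.integrable_add)
  also have "\<dots> = (ff (real (card S)) 4 * \<pi>^4 + (6 - 4*\<mu>) * (ff (real (card S)) 3 * \<pi>^3)
     + (7 - 12*\<mu> + 6*\<mu>^2) * (ff (real (card S)) 2 * \<pi>^2)
     + (1 - 4*\<mu> + 6*\<mu>^2 - 4*\<mu>^3) * (ff (real (card S)) 1 * \<pi>^1) + \<mu>^4 * (ff (real (card S)) 0 * \<pi>^0)) / real t"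
    by (simp add: Ek add_divide_distrib)
  also have "\<dots> \<le> (\<mu> + 3 * \<mu>^2) / real t"
  proof (rule divide_right_mono)
    have "0 \<le> \<pi>" unfolding \<pi>_def by simp
    moreover have "\<pi> \<le> 1" unfolding \<pi>_def using tpos
      using card_mono[of "{..<t}" "B \<inter> {..<t}"] by simp
    ultimately show "ff (real (card S)) 4 * \<pi>^4 + (6 - 4*\<mu>) * (ff (real (card S)) 3 * \<pi>^3)
     + (7 - 12*\<mu> + 6*\<mu>^2) * (ff (real (card S)) 2 * \<pi>^2)
     + (1 - 4*\<mu> + 6*\<mu>^2 - 4*\<mu>^3) * (ff (real (card S)) 1 * \<pi>^1) + \<mu>^4 * (ff (real (card S)) 0 * \<pi>^0)
     \<le> \<mu> + 3 * \<mu>^2"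
      unfolding \<mu>_def by (rule poly_bound) simp
  qed simp
  finally show ?thesis unfolding X_def I_def .
qed

end



lemma div_block: "(y::nat) div m = j \<Longrightarrow> 0 < m \<Longrightarrow> j * m \<le> y \<and> y < j * m + m"
proof -
  assume a: "y div m = j" "0 < m"
  have "y = j * m + y mod m" using div_mult_mod_eq[of y m] a by simp
  moreover have "y mod m < m" using a by simp
  ultimately show ?thesis by linarith
qed

lemma dense:
  fixes m L a p :: nat
  assumes fin: "finite S" and m: "1 \<le> m" and L1: "16*m \<le> L" and L2: "L < 32*m"
    and ap: "a \<le> p" and pb: "p \<le> a + L - 1" and fu: "L \<le> card (keys h S a (a+L-1))"
  shows "\<exists>j. p div m \<le> j + 32 \<and> j \<le> p div m + 32 \<and> 8*m \<le> 9 * card {y\<in>S. h y div m = j}"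
proof (rule ccontr)
  assume neg: "\<not> ?thesis"
  define b where "b = a + L - 1"
  define R where "R = {a div m .. b div m}"
  define Y where "Y = (\<lambda>j. {y\<in>S. h y div m = j})"
  have sub: "keys h S a b \<subseteq> (\<Union>j\<in>R. Y j)"
    unfolding keys_def R_def Y_def by (auto intro: div_le_mono)
  have "card (keys h S a b) \<le> card (\<Union>j\<in>R. Y j)"
    by (rule card_mono[OF _ sub]) (auto simp: Y_def R_def fin)
  also have "\<dots> \<le> (\<Sum>j\<in>R. card (Y j))" by (rule card_UN_le) (simp add: R_def)
  finally have c1: "L \<le> (\<Sum>j\<in>R. card (Y j))" using fu b_def by simp
  have near: "p div m \<le> j + 32 \<and> j \<le> p div m + 32" if "j \<in> R" for j
  proof
    have "p < a + 32 * m" using pb L2 by linarith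
    then have "p div m \<le> (a + 32 * m) div m" by (simp add: div_le_mono)
    also have "\<dots> = a div m + 32" using m by simp
    finally show "p div m \<le> j + 32" using that R_def by simp
    have "b \<le> p + 32 * m" using ap L2 b_def by linarith
    then have "b div m \<le> (p + 32 * m) div m" by (simp add: div_le_mono)
    also have "\<dots> = p div m + 32" using m by simp
    finally show "j \<le> p div m + 32" using that R_def by simp
  qed
  have each: "9 * card (Y j) \<le> 8 * m - 1" if "j \<in> R" for j
  proof -
    have "\<not> 8*m \<le> 9 * card (Y j)" using neg near[OF that] unfolding Y_def by blast
    then show ?thesis by arith
  qed
  have "9 * L \<le> (\<Sum>j\<in>R. 9 * card (Y j))" using c1 by (simp add: sum_distrib_left[symmetric])
  also have "\<dots> \<le> (\<Sum>j\<in>R. 8 * m - 1)" by (rule sum_mono) (rule each)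
  also have "\<dots> = card R * (8 * m - 1)" by simp
  finally have c2: "9 * L \<le> card R * (8 * m - 1)" .
  have abd: "a div m \<le> b div m" using b_def L1 m by (simp add: div_le_mono)
  have cR: "card R = b div m + 1 - a div m" unfolding R_def by simp
  have f1: "m * (b div m) \<le> b" by simp
  have f2: "a < m * (a div m) + m" using div_block[of a m "a div m"] m by (simp add: mult.commute)
  have "m * card R < L + 2 * m"
  proof -
    have "m * card R = m * (b div m) + m - m * (a div m)" using cR abd by (simp add: diff_mult_distrib2 algebra_simps)
    then show ?thesis using f1 f2 b_def L1 m by linarith
  qed
  then have "8 * (m * card R) \<le> 8 * L + 16 * m" by linarith
  then have "card R * (8 * m) \<le> 9 * L" using L1 by (simp add: algebra_simps)
  moreover have "card R > 0" using abd cR by simp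
  moreover have "card R * (8 * m - 1) < card R * (8 * m)"
    using \<open>card R > 0\<close> m by (intro mult_strict_left_mono) auto
  ultimately have "card R * (8 * m - 1) < 9 * L" by linarith
  with c2 show False by simp
qed

lemma N_bound:
  fixes h :: "nat \<Rightarrow> nat" and S :: "nat set"
  assumes fin: "finite S"
  shows "real (card {x\<in>S. Ev h S q x}) \<le> 32 + (\<Sum>l<card S. 64 * 2^l *
     (if \<exists>j. h q div 2^l \<le> j + 32 \<and> j \<le> h q div 2^l + 32 \<and> 8*2^l \<le> 9 * card {y\<in>S. h y div 2^l = j} then 1 else 0))"
    (is "_ \<le> 32 + ?sum")
proof (cases "{x\<in>S. Ev h S q x} = {}")
  case True
  have "0 \<le> ?sum" by (intro sum_nonneg) auto
  moreover have "real (card {x\<in>S. Ev h S q x}) = 0" unfolding True by simp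
  ultimately show ?thesis by linarith
next
  case False
  define p where "p = h q"
  define FI where "FI = {(a,b). full h S a b \<and> a \<le> p \<and> p \<le> b}"
  have keysS: "\<And>a b. card (keys h S a b) \<le> card S" unfolding keys_def using fin by (simp add: card_mono)
  have FIsub: "FI \<subseteq> {..p} \<times> {..p + card S}"
  proof
    fix ab assume "ab \<in> FI"
    then obtain a b where ab: "ab = (a,b)" "full h S a b" "a \<le> p" "p \<le> b" unfolding FI_def by auto
    then have "b + 1 - a \<le> card S" "a \<le> b" using keysS[of a b] unfolding full_def by auto
    then show "ab \<in> {..p} \<times> {..p + card S}" using ab by auto
  qed
  have finFI: "finite FI" by (rule finite_subset[OF FIsub]) auto
  obtain x0 where "x0 \<in> S" "Ev h S q x0" using False by auto
  then have neFI: "FI \<noteq> {}" unfolding Ev_def FI_def p_def by auto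
  define A where "A = Min (fst ` FI)"
  define B where "B = Max (snd ` FI)"
  have "A \<in> fst ` FI" unfolding A_def using finFI neFI by (intro Min_in) auto
  then obtain b1 where b1: "(A, b1) \<in> FI" by force
  have "B \<in> snd ` FI" unfolding B_def using finFI neFI by (intro Max_in) auto
  then obtain a2 where a2: "(a2, B) \<in> FI" by force
  have Ale: "\<And>a b. (a,b) \<in> FI \<Longrightarrow> A \<le> a" unfolding A_def using finFI by (metis Min_le finite_imageI fst_conv image_eqI)
  have Bge: "\<And>a b. (a,b) \<in> FI \<Longrightarrow> b \<le> B" unfolding B_def using finFI by (metis Max_ge finite_imageI snd_conv image_eqI)
  have subU: "{x\<in>S. Ev h S q x} \<subseteq> keys h S A b1 \<union> keys h S a2 B"
  proof
    fix x assume "x \<in> {x\<in>S. Ev h S q x}"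
    then obtain a b where x: "x \<in> S" "a \<le> h x" "h x \<le> b" "a \<le> p" "p \<le> b" "full h S a b"
      unfolding Ev_def p_def by auto
    then have "(a,b) \<in> FI" unfolding FI_def by auto
    then have "A \<le> h x" "h x \<le> B" using Ale Bge x by force+
    moreover have "b1 \<ge> p" "a2 \<le> p" using b1 a2 unfolding FI_def by auto
    ultimately show "x \<in> keys h S A b1 \<union> keys h S a2 B" using x(1) unfolding keys_def by auto
  qed
  have "card {x\<in>S. Ev h S q x} \<le> card (keys h S A b1) + card (keys h S a2 B)"
    by (rule order_trans[OF card_mono[OF _ subU] card_Un_le]) (simp add: keys_def fin)
  then obtain a b where ab: "(a,b) \<in> FI" and Nle: "card {x\<in>S. Ev h S q x} \<le> 2 * card (keys h S a b)"
    using b1 a2 by (cases "card (keys h S A b1) \<le> card (keys h S a2 B)") force+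
  define c where "c = card (keys h S a b)"
  have ab2: "full h S a b" "a \<le> p" "p \<le> b" using ab unfolding FI_def by auto
  then have c1: "b + 1 - a \<le> c" "a \<le> b" unfolding full_def c_def by auto
  have sub2: "keys h S a b \<subseteq> keys h S a (a + c - 1)" using c1 unfolding keys_def by auto
  have fullc: "c \<le> card (keys h S a (a + c - 1))"
    using card_mono[OF _ sub2] fin unfolding c_def keys_def by simp
  have pc: "p \<le> a + c - 1" using c1 ab2 by linarith
  have "0 \<le> ?sum" by (intro sum_nonneg) auto
  show ?thesis
  proof (cases "c < 16")
    case True
    then show ?thesis using Nle \<open>0 \<le> ?sum\<close> c_def by linarith
  next
    case False
    then obtain l where l: "2^l \<le> c div 16" "c div 16 < 2^(l+1)"
    proof -
      have "1 \<le> c div 16" using False by simp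
      then show ?thesis using ex_power_ivl1[of 2 "c div 16"] that by auto
    qed
    have l1: "16 * 2^l \<le> c" "c < 32 * 2^l" using l by auto
    have G: "\<exists>j. p div 2^l \<le> j + 32 \<and> j \<le> p div 2^l + 32 \<and> 8*2^l \<le> 9 * card {y\<in>S. h y div 2^l = j}"
      by (rule dense[OF fin _ l1 ab2(2) pc fullc]) simp
    have "c \<le> card S" unfolding c_def by (rule keysS)
    then have "2^l \<le> card S" using l1 by linarith
    then have lS: "l < card S" using less_exp[of l] by linarith
    have "real (64 * 2^l) * 1 \<le> ?sum"
      using member_le_sum[of l "{..<card S}" "\<lambda>l. (64::real) * 2^l *
     (if \<exists>j. h q div 2^l \<le> j + 32 \<and> j \<le> h q div 2^l + 32 \<and> 8*2^l \<le> 9 * card {y\<in>S. h y div 2^l = j} then 1 else 0)"]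
        G lS p_def by simp
    moreover have "real (card {x\<in>S. Ev h S q x}) \<le> 2 * real c" using Nle c_def by simp
    moreover have "2 * real c \<le> 64 * 2^l"
    proof -
      have "real c \<le> real (32 * 2^l)" using l1 by linarith
      then show ?thesis by simp
    qed
    ultimately show ?thesis by simp
  qed
qed




context setting begin

lemma TAIL:
  fixes B :: "nat set" and m :: nat
  assumes p: "p < t" and m: "1 \<le> m" and cB: "card (B \<inter> {..<t}) \<le> m" and load: "3 * card S \<le> 2 * t"
  shows "measure_pmf.prob H {h. h q = p \<and> 8*m \<le> 9 * card {y\<in>S. h y \<in> B}} \<le> 1641 / (real t * real m ^ 2)"
proof -
  define \<pi> where "\<pi> = real (card (B \<inter> {..<t})) / real t"
  define \<mu> where "\<mu> = real (card S) * \<pi>"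
  define M where "M = real m"
  define X where "X = (\<lambda>h. real (card {y\<in>S. h y \<in> B}))"
  define I where "I = (\<lambda>h. indicator {h. h q = p} h :: real)"
  have M1: "1 \<le> M" using m M_def by simp
  have tp: "0 < real t" using tpos by simp
  have mu0: "0 \<le> \<mu>" unfolding \<mu>_def \<pi>_def by simp
  have mule: "\<mu> \<le> 2 * M / 3"
  proof -
    have "real (card S) * real (card (B \<inter> {..<t})) \<le> (2 * real t / 3) * M"
      using load cB M_def by (intro mult_mono) auto
    then show ?thesis unfolding \<mu>_def \<pi>_def using tp by (simp add: field_simps)
  qed
  have E4: "measure_pmf.expectation H (\<lambda>h. I h * (X h - \<mu>) ^ 4) \<le> (\<mu> + 3 * \<mu>^2) / real t"
    using M4[OF p, of B] unfolding I_def X_def \<mu>_def \<pi>_def by simp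
  have "\<mu> + 3 * \<mu>^2 \<le> 4 * M^2"
  proof -
    have "\<mu> \<le> M" using mule M1 by linarith
    then have "\<mu>^2 \<le> M^2" using mu0 by (simp add: power_mono)
    moreover have "M \<le> M^2" using M1 by (simp add: power2_eq_square)
    ultimately show ?thesis using \<open>\<mu> \<le> M\<close> by linarith
  qed
  then have E4': "measure_pmf.expectation H (\<lambda>h. I h * (X h - \<mu>) ^ 4) \<le> 4 * M^2 / real t"
    using E4 tp by (meson divide_right_mono less_imp_le order_trans)
  define c where "c = (9 / (2 * M)) ^ 4"
  have c0: "0 \<le> c" unfolding c_def using M1 by simp
  have pw: "indicator {h. h q = p \<and> 8*m \<le> 9 * card {y\<in>S. h y \<in> B}} h \<le> c * (I h * (X h - \<mu>) ^ 4)" for h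
  proof (cases "h q = p \<and> 8*m \<le> 9 * card {y\<in>S. h y \<in> B}")
    case True
    then have "real (8*m) \<le> real (9 * card {y\<in>S. h y \<in> B})" by (simp only: of_nat_le_iff)
    then have "8 * M \<le> 9 * X h" unfolding M_def X_def by simp
    then have "2 * M / 9 \<le> X h - \<mu>" using mule by linarith
    moreover have "0 \<le> 2 * M / 9" using M1 by simp
    ultimately have "(2 * M / 9) ^ 4 \<le> (X h - \<mu>) ^ 4" by (rule power_mono)
    then have "c * (2 * M / 9) ^ 4 \<le> c * (X h - \<mu>) ^ 4" using c0 by (rule mult_left_mono)
    moreover have "c * (2 * M / 9) ^ 4 = 1" unfolding c_def using M1 by (simp add: power_divide field_simps)
    ultimately show ?thesis using True unfolding I_def by simp
  next
    case False
    then show ?thesis using c0 unfolding I_def by simp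
  qed
  have bndX: "\<And>h. \<bar>X h\<bar> \<le> real (card S)"
    unfolding X_def using finS by (simp add: card_mono)
  have intg: "integrable (measure_pmf H) (\<lambda>h. c * (I h * (X h - \<mu>) ^ 4))"
  proof (rule integrable_bnd)
    fix h
    have "\<bar>X h - \<mu>\<bar> \<le> real (card S) + \<mu>" using bndX[of h] mu0 by linarith
    then have "\<bar>X h - \<mu>\<bar> ^ 4 \<le> (real (card S) + \<mu>) ^ 4" by (rule power_mono) simp
    then have "\<bar>I h * (X h - \<mu>) ^ 4\<bar> \<le> (real (card S) + \<mu>) ^ 4"
      unfolding I_def by (auto simp: indicator_def power_abs)
    then show "\<bar>c * (I h * (X h - \<mu>) ^ 4)\<bar> \<le> c * (real (card S) + \<mu>) ^ 4"
      using c0 by (simp add: abs_mult mult_left_mono)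
  qed
  have "measure_pmf.prob H {h. h q = p \<and> 8*m \<le> 9 * card {y\<in>S. h y \<in> B}} =
     measure_pmf.expectation H (indicator {h. h q = p \<and> 8*m \<le> 9 * card {y\<in>S. h y \<in> B}})" by simp
  also have "\<dots> \<le> measure_pmf.expectation H (\<lambda>h. c * (I h * (X h - \<mu>) ^ 4))"
    by (rule integral_mono[OF _ intg pw]) (rule integrable_bnd[where B=1], simp add: indicator_def)
  also have "\<dots> = c * measure_pmf.expectation H (\<lambda>h. I h * (X h - \<mu>) ^ 4)" by simp
  also have "\<dots> \<le> c * (4 * M^2 / real t)" using E4' c0 by (rule mult_left_mono)
  also have "\<dots> = 6561 / (4 * real t * M^2)" unfolding c_def using M1 tp
    by (simp add: power_divide field_simps)
  also have "\<dots> \<le> 1641 / (real t * real m ^ 2)" unfolding M_def using M1 tp M_def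
    by (simp add: field_simps)
  finally show ?thesis .
qed

lemma G_bound:
  assumes load: "3 * card S \<le> 2 * t"
  shows "measure_pmf.prob H {h. \<exists>j. h q div 2^l \<le> j + 32 \<and> j \<le> h q div 2^l + 32 \<and>
      8*2^l \<le> 9 * card {y\<in>S. h y div 2^l = j}} \<le> 65 * 1641 / (2^l)^2"
proof -
  define m :: nat where "m = 2^l"
  have m1: "1 \<le> m" unfolding m_def by simp
  define E where "E = (\<lambda>p j. {h::nat\<Rightarrow>nat. h q = p \<and> 8*m \<le> 9 * card {y\<in>S. h y \<in> {y. y div m = j}}})"
  define J where "J = (\<lambda>p. {p div m - 32 .. p div m + 32})"
  define Gs where "Gs = {h::nat\<Rightarrow>nat. \<exists>j. h q div 2^l \<le> j + 32 \<and> j \<le> h q div 2^l + 32 \<and>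
      8*2^l \<le> 9 * card {y\<in>S. h y div 2^l = j}}"
  have sup: "\<And>h. h \<in> set_pmf H \<Longrightarrow> h q < t" using fi qu unfolding five_independent_def by blast
  have sub: "Gs \<inter> set_pmf H \<subseteq> (\<Union>p\<in>{..<t}. \<Union>j\<in>J p. E p j)"
  proof
    fix h assume h: "h \<in> Gs \<inter> set_pmf H"
    then obtain j where j: "h q div m \<le> j + 32" "j \<le> h q div m + 32" "8*m \<le> 9 * card {y\<in>S. h y div m = j}"
      unfolding Gs_def m_def by auto
    have "h q < t" using sup h by auto
    moreover have "j \<in> J (h q)" unfolding J_def using j by auto
    moreover have "h \<in> E (h q) j" unfolding E_def using j by simp
    ultimately show "h \<in> (\<Union>p\<in>{..<t}. \<Union>j\<in>J p. E p j)" by blast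
  qed
  have cJ: "card (J p) \<le> 65" for p unfolding J_def by simp
  have PE: "measure_pmf.prob H (E p j) \<le> 1641 / (real t * real m ^ 2)" if "p < t" for p j
  proof -
    have "{y. y div m = j} \<inter> {..<t} \<subseteq> {j*m..<j*m+m}" using div_block m1 by auto
    then have "card ({y. y div m = j} \<inter> {..<t}) \<le> m" using card_mono[of "{j*m..<j*m+m}"] by fastforce
    then show ?thesis unfolding E_def by (rule TAIL[OF that m1 _ load])
  qed
  have "measure_pmf.prob H Gs = measure_pmf.prob H (Gs \<inter> set_pmf H)" by (simp add: measure_Int_set_pmf)
  also have "\<dots> \<le> measure_pmf.prob H (\<Union>p\<in>{..<t}. \<Union>j\<in>J p. E p j)"
    by (rule measure_pmf.finite_measure_mono[OF sub]) simp
  also have "\<dots> \<le> (\<Sum>p\<in>{..<t}. measure_pmf.prob H (\<Union>j\<in>J p. E p j))"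
    by (rule measure_UNION_le) auto
  also have "\<dots> \<le> (\<Sum>p\<in>{..<t}. \<Sum>j\<in>J p. measure_pmf.prob H (E p j))"
    by (intro sum_mono measure_UNION_le) (auto simp: J_def)
  also have "\<dots> \<le> (\<Sum>p\<in>{..<t}. \<Sum>j\<in>J p. 1641 / (real t * real m ^ 2))"
    by (intro sum_mono PE) auto
  also have "\<dots> \<le> (\<Sum>p\<in>{..<t}. 65 * (1641 / (real t * real m ^ 2)))"
  proof (intro sum_mono)
    fix p
    have "real (card (J p)) \<le> 65" using cJ[of p] by simp
    then show "(\<Sum>j\<in>J p. 1641 / (real t * real m ^ 2)) \<le> 65 * (1641 / (real t * real m ^ 2))"
    proof -
      have "0 \<le> 1641 / (real t * real m ^ 2)" by simp
      then have "real (card (J p)) * (1641 / (real t * real m ^ 2)) \<le> 65 * (1641 / (real t * real m ^ 2))"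
        using \<open>real (card (J p)) \<le> 65\<close> by (rule mult_right_mono[rotated])
      then show ?thesis by simp
    qed
  qed
  also have "\<dots> = 65 * 1641 / (2^l)^2" using tpos unfolding m_def by (simp add: field_simps)
  finally show ?thesis unfolding Gs_def .
qed

lemma geo_half: "(\<Sum>l<n. (1/2::real)^l) = 2 - 2 * (1/2)^n"
  by (induction n) auto

lemma EN:
  assumes load: "3 * card S \<le> 2 * t"
  shows "(\<Sum>x\<in>S. measure_pmf.prob H {h. Ev h S q x}) \<le> 13653152"
proof -
  define Gl where "Gl = (\<lambda>l. {h::nat\<Rightarrow>nat. \<exists>j. h q div 2^l \<le> j + 32 \<and> j \<le> h q div 2^l + 32 \<and>
      8*2^l \<le> 9 * card {y\<in>S. h y div 2^l = j}})"
  define R where "R = (\<lambda>h. 32 + (\<Sum>l<card S. 64 * 2^l * indicator (Gl l) h) :: real)"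
  have Nsum: "real (card {x\<in>S. Ev h S q x}) = (\<Sum>x\<in>S. indicator {h. Ev h S q x} h)" for h
    using sum.inter_filter[OF finS, of "\<lambda>_. 1::real" "\<lambda>x. Ev h S q x", symmetric]
    by (simp add: indicator_def of_bool_def)
  have NR: "real (card {x\<in>S. Ev h S q x}) \<le> R h" for h
  proof -
    have eqI: "(indicator (Gl l) h :: real) = (if \<exists>j. h q div 2^l \<le> j + 32 \<and> j \<le> h q div 2^l + 32 \<and>
      8*2^l \<le> 9 * card {y\<in>S. h y div 2^l = j} then 1 else 0)" for l
      by (simp add: Gl_def indicator_def)
    show ?thesis unfolding R_def eqI by (rule N_bound[OF finS])
  qed
  have int_ind: "integrable (measure_pmf H) (\<lambda>h. indicator A h :: real)" for A :: "(nat\<Rightarrow>nat) set"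
    by (rule integrable_bnd[where B=1]) (simp add: indicator_def)
  have intN: "integrable (measure_pmf H) (\<lambda>h. real (card {x\<in>S. Ev h S q x}))"
    by (rule integrable_bnd[where B="real (card S)"]) (simp add: card_mono finS)
  have intS: "integrable (measure_pmf H) (\<lambda>h. \<Sum>l<card S. 64 * 2^l * indicator (Gl l) h :: real)"
    by (intro Bochner_Integration.integrable_sum integrable_mult_right int_ind)
  have intR: "integrable (measure_pmf H) R"
    unfolding R_def by (intro Bochner_Integration.integrable_add intS measure_pmf.integrable_const)
  have "(\<Sum>x\<in>S. measure_pmf.prob H {h. Ev h S q x}) = (\<Sum>x\<in>S. measure_pmf.expectation H (indicator {h. Ev h S q x}))"
    by simp
  also have "\<dots> = measure_pmf.expectation H (\<lambda>h. \<Sum>x\<in>S. indicator {h. Ev h S q x} h)"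
    by (rule Bochner_Integration.integral_sum[symmetric]) (rule int_ind)
  also have "\<dots> = measure_pmf.expectation H (\<lambda>h. real (card {x\<in>S. Ev h S q x}))"
    by (simp add: Nsum)
  also have "\<dots> \<le> measure_pmf.expectation H R"
    by (rule integral_mono[OF intN intR NR])
  also have "\<dots> = 32 + (\<Sum>l<card S. 64 * 2^l * measure_pmf.prob H (Gl l))"
  proof -
    have "measure_pmf.expectation H R = measure_pmf.expectation H (\<lambda>h. 32::real)
       + measure_pmf.expectation H (\<lambda>h. \<Sum>l<card S. 64 * 2^l * indicator (Gl l) h :: real)"
      unfolding R_def by (rule Bochner_Integration.integral_add[OF measure_pmf.integrable_const intS])
    also have "measure_pmf.expectation H (\<lambda>h. \<Sum>l<card S. 64 * 2^l * indicator (Gl l) h :: real)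
       = (\<Sum>l<card S. measure_pmf.expectation H (\<lambda>h. 64 * 2^l * indicator (Gl l) h :: real))"
      by (rule Bochner_Integration.integral_sum) (intro integrable_mult_right int_ind)
    also have "\<dots> = (\<Sum>l<card S. 64 * 2^l * measure_pmf.prob H (Gl l))"
      by (intro sum.cong refl) simp
    finally show ?thesis by simp
  qed
  also have "\<dots> \<le> 32 + (\<Sum>l<card S. 64 * 2^l * (65 * 1641 / (2^l)^2))"
  proof (intro add_left_mono sum_mono mult_left_mono)
    fix l show "measure_pmf.prob H (Gl l) \<le> 65 * 1641 / (2^l)^2" unfolding Gl_def by (rule G_bound[OF load])
  qed simp
  also have "\<dots> = 32 + 6826560 * (\<Sum>l<card S. (1/2::real)^l)"
    unfolding sum_distrib_left by (intro arg_cong[where f="\<lambda>x. 32 + x"] sum.cong refl) (simp add: power2_eq_square power_divide field_simps)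
  also have "\<dots> \<le> 13653152" unfolding geo_half by simp
  finally show ?thesis .
qed

end



theorem theorem9:
  shows "\<exists>C::real. \<forall>(u::nat) (t::nat) (b::nat) (xs::nat list) (q::nat)
            (H::(nat \<Rightarrow> nat) pmf) (\<Sigma>::(nat \<Rightarrow> nat) pmf).
     (\<exists>k. t = 2 ^ k) \<longrightarrow>
     distinct xs \<longrightarrow> set xs \<subseteq> {..<u} \<longrightarrow>
     3 * length xs \<le> 2 * t \<longrightarrow>
     five_independent H u t \<longrightarrow>
     universal_sig \<Sigma> u b \<longrightarrow>
     q < u \<longrightarrow> q \<notin> set xs \<longrightarrow>
     measure_pmf.prob (pair_pmf H \<Sigma>)
        {(h, s). lp_query h s (lp_build h s xs) q} \<le> C / 2 ^ b"
proof (intro exI[of _ 13653152] allI impI)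
  fix u t b xs q H \<Sigma>
  assume tk: "\<exists>k. t = 2 ^ k" and dxs: "distinct xs" and xu: "set xs \<subseteq> {..<u}"
    and load0: "3 * length xs \<le> 2 * t" and fi: "five_independent H u t"
    and us: "universal_sig \<Sigma> u b" and qu: "q < u" and qS: "q \<notin> set xs"
  define S where "S = set xs"
  have tpos: "0 < t" using tk by auto
  have cS: "card S = length xs" unfolding S_def using dxs by (simp add: distinct_card)
  have load: "3 * card S \<le> 2 * t" using cS load0 by simp
  define A where "A = (\<lambda>x. {h::nat\<Rightarrow>nat. Ev h S q x})"
  define Bs where "Bs = (\<lambda>x. {s::nat\<Rightarrow>nat. s x = s q})"
  have sub: "{(h, s). lp_query h s (lp_build h s xs) q} \<subseteq> (\<Union>x\<in>S. A x \<times> Bs x)"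
  proof
    fix hs assume "hs \<in> {(h, s). lp_query h s (lp_build h s xs) q}"
    then obtain h s where hs: "hs = (h, s)" "lp_query h s (lp_build h s xs) q" by auto
    then obtain x where "x \<in> set xs" "s x = s q" "Ev h (set xs) q x" using yes_imp[OF dxs] by blast
    then show "hs \<in> (\<Union>x\<in>S. A x \<times> Bs x)" using hs unfolding A_def Bs_def S_def by auto
  qed
  have PB: "measure_pmf.prob \<Sigma> (Bs x) \<le> 1 / 2 ^ b" if "x \<in> S" for x
  proof -
    have "x < u" "x \<noteq> q" using that xu qS S_def by auto
    then show ?thesis using us qu unfolding universal_sig_def Bs_def by auto
  qed
  have sumA: "(\<Sum>x\<in>S. measure_pmf.prob H (A x)) \<le> 13653152"
  proof (cases "5 \<le> u")
    case True
    interpret setting H u t S q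
      by unfold_locales (use fi True tpos xu qu qS S_def in auto)
    show ?thesis unfolding A_def by (rule EN[OF load])
  next
    case False
    have "S \<subseteq> {..<u} - {q}" using xu qS S_def by auto
    then have "card S \<le> card ({..<u} - {q})" by (intro card_mono) auto
    also have "\<dots> = u - 1" using qu by simp
    finally have "card S \<le> 4" using False by simp
    have "(\<Sum>x\<in>S. measure_pmf.prob H (A x)) \<le> (\<Sum>x\<in>S. 1)"
      by (intro sum_mono) simp
    also have "\<dots> = real (card S)" by simp
    also have "\<dots> \<le> 13653152" using \<open>card S \<le> 4\<close> by simp
    finally show ?thesis .
  qed
  have "measure_pmf.prob (pair_pmf H \<Sigma>) {(h, s). lp_query h s (lp_build h s xs) q}
      \<le> measure_pmf.prob (pair_pmf H \<Sigma>) (\<Union>x\<in>S. A x \<times> Bs x)"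
    by (rule measure_pmf.finite_measure_mono[OF sub]) simp
  also have "\<dots> \<le> (\<Sum>x\<in>S. measure_pmf.prob (pair_pmf H \<Sigma>) (A x \<times> Bs x))"
    by (rule measure_UNION_le) (auto simp: S_def)
  also have "\<dots> = (\<Sum>x\<in>S. measure_pmf.prob H (A x) * measure_pmf.prob \<Sigma> (Bs x))"
    by (simp add: prod_prob)
  also have "\<dots> \<le> (\<Sum>x\<in>S. measure_pmf.prob H (A x) * (1 / 2 ^ b))"
    by (intro sum_mono mult_left_mono PB) auto
  also have "\<dots> = (\<Sum>x\<in>S. measure_pmf.prob H (A x)) / 2 ^ b"
    by (simp add: sum_divide_distrib)
  also have "\<dots> \<le> 13653152 / 2 ^ b"
    using sumA by (simp add: divide_right_mono)
  finally show "measure_pmf.prob (pair_pmf H \<Sigma>) {(h, s). lp_query h s (lp_build h s xs) q} \<le> 13653152 / 2 ^ b" .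
qed


end
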